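(* Define $f:\mathbb{R}\to\mathbb{R}$ by $f(x)=x$ if $x\in\{0\}\cup[1,\infty)$; $f(x)=2^{-n}$ if $x\in[3\cdot2^{-(n+2)},2^{-n})$, $n=0,1,2,\dots$; $f(x)=2x-2^{-(n+1)}$ if $x\in[2^{-(n+1)},3\cdot2^{-(n+2)})$, $n=0,1,2,\dots$; and $f(x)=f(-x)$ if $x<0$. Then $f(x)\ge f(0)+x^2$ for all $x\in[-1,1]$, so $\bar x=0$ is a strong local minimizer of $f$, while $\mathbb{R}\times\{0\}\subset T_{\operatorname{gph}\partial f}(0,0)$; in particular, for every $w\ne0$ one has $0\in D(\partial f)(0|0)(w)$, so there is no $w\neq 0$-uniform positivity: $\langle z,w\rangle=0$ for $z=0\in D(\partial f)(0|0)(w)$.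
   Context: $\partial f$ is the limiting subdifferential: $\partial f(\bar x)=\{v\mid (v,-1)\in N_{\operatorname{epi} f}(\bar x,f(\bar x))\}$ with $N$ the limiting normal cone. The tangent cone is $T_\Omega(\bar u)=\{v\mid \exists t_k\downarrow0,\ v_k\to v,\ \bar u+t_kv_k\in\Omega\}$ and $D(\partial f)(\bar x|\bar v)(w)=\{z\mid (w,z)\in T_{\operatorname{gph}\partial f}(\bar x,\bar v)\}$. $\bar x$ is a strong local minimizer if there are $\kappa,\gamma>0$ with $f(x)-f(\bar x)\ge\frac\kappa2|x-\bar x|^2$ for $|x-\bar x|\le\gamma$. *)

theory Defs
  imports "HOL-Analysis.Analysis"
begin

definition regular_normal_cone :: "'a::real_inner set \<Rightarrow> 'a \<Rightarrow> 'a set" where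
  "regular_normal_cone \<Omega> u = {v. u \<in> \<Omega> \<and>
     (\<forall>\<epsilon>>0. \<exists>\<delta>>0. \<forall>u'\<in>\<Omega>. norm (u' - u) < \<delta> \<longrightarrow> inner v (u' - u) \<le> \<epsilon> * norm (u' - u))}"

definition limiting_normal_cone :: "'a::real_inner set \<Rightarrow> 'a \<Rightarrow> 'a set" where
  "limiting_normal_cone \<Omega> u = {v. u \<in> \<Omega> \<and>
     (\<exists>uk vk. (\<forall>k. uk k \<in> \<Omega> \<and> vk k \<in> regular_normal_cone \<Omega> (uk k))
        \<and> uk \<longlonglongrightarrow> u \<and> vk \<longlonglongrightarrow> v)}"

definition limiting_subdiff :: "(real \<Rightarrow> real) \<Rightarrow> real \<Rightarrow> real set" where
  "limiting_subdiff f x = {v. (v, -1) \<in> limiting_normal_cone {(y, \<alpha>). f y \<le> \<alpha>} (x, f x)}"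

definition gph :: "('a \<Rightarrow> 'b set) \<Rightarrow> ('a \<times> 'b) set" where
  "gph S = {(x, v). v \<in> S x}"

definition tangent_cone :: "'a::real_normed_vector set \<Rightarrow> 'a \<Rightarrow> 'a set" where
  "tangent_cone \<Omega> u = {v. \<exists>t vk. (\<forall>k. t k > 0) \<and> t \<longlonglongrightarrow> 0 \<and> vk \<longlonglongrightarrow> v
       \<and> (\<forall>k. u + t k *\<^sub>R vk k \<in> \<Omega>)}"

definition graph_deriv :: "('a::real_normed_vector \<Rightarrow> 'b::real_normed_vector set) \<Rightarrow> 'a \<Rightarrow> 'b \<Rightarrow> 'a \<Rightarrow> 'b set" where
  "graph_deriv S x v w = {z. (w, z) \<in> tangent_cone (gph S) (x, v)}"

definition strong_local_minimizer :: "('a::real_normed_vector \<Rightarrow> real) \<Rightarrow> 'a \<Rightarrow> bool" where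
  "strong_local_minimizer f x0 \<longleftrightarrow> (\<exists>\<kappa>>0. \<exists>\<gamma>>0. \<forall>x. norm (x - x0) \<le> \<gamma> \<longrightarrow>
      f x - f x0 \<ge> \<kappa> / 2 * (norm (x - x0))\<^sup>2)"

definition fpos :: "real \<Rightarrow> real" where
  "fpos x = (if x = 0 \<or> x \<ge> 1 then x
     else if \<exists>n::nat. 3 / 2^(n+2) \<le> x \<and> x < 1 / 2^n
       then 1 / 2^(THE n::nat. 3 / 2^(n+2) \<le> x \<and> x < 1 / 2^n)
     else if \<exists>n::nat. 1 / 2^(n+1) \<le> x \<and> x < 3 / 2^(n+2)
       then 2 * x - 1 / 2^((THE n::nat. 1 / 2^(n+1) \<le> x \<and> x < 3 / 2^(n+2)) + 1)
     else undefined)"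

definition fex :: "real \<Rightarrow> real" where
  "fex x = (if x < 0 then fpos (- x) else fpos x)"

end

theory Submission
  imports Defs
begin

lemma dy_mono: "m < n \<Longrightarrow> (1::real) / 2^n \<le> 1 / 2^(m+1)"
proof -
  assume "m < n"
  hence "(2::real)^(m+1) \<le> 2^n" by (intro power_increasing) auto
  thus ?thesis by (simp add: frac_le)
qed

lemma dy_unique:
  assumes "(1::real)/2^(m+1) \<le> y" "y < 1/2^m" "1/2^(n+1) \<le> y" "y < 1/2^n"
  shows "m = n"
proof (rule ccontr)
  assume "m \<noteq> n"
  then consider "m < n" | "n < m" by linarith
  thus False
  proof cases
    case 1 from dy_mono[OF 1] assms show False by linarith
  next
    case 2 from dy_mono[OF 2] assms show False by linarith
  qed
qed

lemma dy_exists: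
  assumes "0 < y" "y < (1::real)"
  shows "\<exists>n. 1/2^(n+1) \<le> y \<and> y < 1/2^n"
proof -
  obtain n where n: "1/y < 2^n" using real_arch_pow[of 2 "1/y"] by auto
  have "1/2^n < y" using n assms by (simp add: field_simps)
  hence ex: "\<exists>n. (1::real)/2^n \<le> y" by (auto intro: less_imp_le)
  define m where "m = (LEAST n. (1::real)/2^n \<le> y)"
  have m1: "1/2^m \<le> y" unfolding m_def by (rule LeastI_ex[OF ex])
  have m0: "m \<noteq> 0"
  proof
    assume "m = 0" with m1 assms show False by simp
  qed
  then obtain k where k: "m = Suc k" by (cases m) auto
  have "\<not> (1::real)/2^k \<le> y" using not_less_Least[of k "\<lambda>n. (1::real)/2^n \<le> y"] k m_def by auto
  thus ?thesis using m1 k by (auto intro!: exI[of _ k])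
qed

lemma fpos_ge:
  assumes "0 < y" "y < (1::real)"
  shows "fpos y \<ge> y"
proof -
  have nb: "\<not> (y = 0 \<or> y \<ge> 1)" using assms by auto
  have u1: "\<And>m n. 3/2^(m+2) \<le> y \<and> y < 1/2^m \<Longrightarrow> 3/2^(n+2) \<le> y \<and> y < 1/2^n \<Longrightarrow> m = n"
  proof -
    fix m n :: nat assume a: "3/2^(m+2) \<le> y \<and> y < 1/2^m" "3/2^(n+2) \<le> y \<and> y < 1/2^n"
    have "(1::real)/2^(m+1) \<le> 3/2^(m+2)" "(1::real)/2^(n+1) \<le> 3/2^(n+2)" by (auto simp: field_simps)
    thus "m = n" using a by (intro dy_unique[of m y n]) auto
  qed
  have u2: "\<And>m n. 1/2^(m+1) \<le> y \<and> y < 3/2^(m+2) \<Longrightarrow> 1/2^(n+1) \<le> y \<and> y < 3/2^(n+2) \<Longrightarrow> m = n"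
  proof -
    fix m n :: nat assume a: "1/2^(m+1) \<le> y \<and> y < 3/2^(m+2)" "1/2^(n+1) \<le> y \<and> y < 3/2^(n+2)"
    have "(3::real)/2^(m+2) \<le> 1/2^m" "(3::real)/2^(n+2) \<le> 1/2^n" by (auto simp: field_simps)
    thus "m = n" using a by (intro dy_unique[of m y n]) auto
  qed
  show ?thesis
  proof (cases "\<exists>n::nat. 3 / 2^(n+2) \<le> y \<and> y < 1 / 2^n")
    case True
    hence "\<exists>!n::nat. 3 / 2^(n+2) \<le> y \<and> y < 1 / 2^n" using u1 by blast
    hence "3 / 2^((THE n::nat. 3 / 2^(n+2) \<le> y \<and> y < 1 / 2^n)+2) \<le> y \<and> y < 1 / 2^(THE n::nat. 3 / 2^(n+2) \<le> y \<and> y < 1 / 2^n)"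
      by (rule theI')
    moreover have "fpos y = 1 / 2^(THE n::nat. 3 / 2^(n+2) \<le> y \<and> y < 1 / 2^n)"
      unfolding fpos_def using True nb by (simp only: if_True if_False)
    ultimately show ?thesis by simp
  next
    case False
    obtain n where n: "1/2^(n+1) \<le> y" "y < 1/2^n" using dy_exists[OF assms] by auto
    have T: "\<exists>n::nat. 1 / 2^(n+1) \<le> y \<and> y < 3 / 2^(n+2)"
      using False n by (intro exI[of _ n]) (auto simp: not_le)
    hence "\<exists>!n::nat. 1 / 2^(n+1) \<le> y \<and> y < 3 / 2^(n+2)" using u2 by blast
    hence "1 / 2^((THE n::nat. 1 / 2^(n+1) \<le> y \<and> y < 3 / 2^(n+2))+1) \<le> y"
      using theI'[of "\<lambda>n::nat. 1 / 2^(n+1) \<le> y \<and> y < 3 / 2^(n+2)"] by blast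
    moreover have "fpos y = 2 * y - 1 / 2^((THE n::nat. 1 / 2^(n+1) \<le> y \<and> y < 3 / 2^(n+2)) + 1)"
      unfolding fpos_def using False T nb by (simp only: if_True if_False)
    ultimately show ?thesis by simp
  qed
qed

lemma t2: "(1::real)/2^(m+1) \<le> 3/2^(m+2)" by (auto simp: field_simps)
lemma t3: assumes "3/2^(n+2) \<le> y" "y < (1::real)/2^n" "3/2^(m+2) \<le> y \<and> y < 1/2^m" shows "m = n"
  using t2[of m] t2[of n] assms by (intro dy_unique[of m y n]) auto
lemma t4: assumes "3/2^(n+2) \<le> y" "y < (1::real)/2^n"
  shows "(THE n::nat. 3 / 2^(n+2) \<le> y \<and> y < 1 / 2^n) = n"
proof (rule the_equality)
  show "3 / 2^(n+2) \<le> y \<and> y < 1 / 2^n" using assms by simp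
next
  fix m assume "3 / 2^(m+2) \<le> y \<and> y < 1 / 2^m" thus "m = n" using t3 assms by blast
qed

lemma fpos_flat:
  assumes "3/2^(n+2) \<le> y" "y < (1::real)/2^n"
  shows "fpos y = 1/2^n"
proof -
  have "(0::real) < 3/2^(n+2)" by simp
  hence y0: "y > 0" using assms by linarith
  have "(1::real)/2^n \<le> 1" by simp
  hence nb: "\<not> (y = 0 \<or> y \<ge> 1)" using assms y0 by linarith
  have ex: "\<exists>n::nat. 3 / 2^(n+2) \<le> y \<and> y < 1 / 2^n" using assms by blast
  have "fpos y = 1 / 2^(THE n::nat. 3 / 2^(n+2) \<le> y \<and> y < 1 / 2^n)"
    unfolding fpos_def using ex nb by (simp only: if_True if_False)
  thus ?thesis using t4[OF assms] by simp
qed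

lemma fex_ge: assumes "\<bar>x\<bar> \<le> 1" shows "fex x \<ge> \<bar>x\<bar>"
proof -
  have g: "fpos y \<ge> y" if "0 \<le> y" "y \<le> 1" for y
  proof (cases "y = 0 \<or> y = 1")
    case True thus ?thesis by (auto simp: fpos_def)
  next
    case False thus ?thesis using fpos_ge[of y] that by auto
  qed
  show ?thesis using g[of x] g[of "-x"] assms unfolding fex_def by auto
qed

lemma fex_nonneg: "fex x \<ge> 0"
proof -
  have "fpos y \<ge> 0" if "0 \<le> y" for y
  proof (cases "y \<ge> 1")
    case True thus ?thesis by (simp add: fpos_def)
  next
    case False thus ?thesis using fex_ge[of y] that by (simp add: fex_def)
  qed
  thus ?thesis unfolding fex_def by auto
qed

lemma fex0: "fex 0 = 0" by (simp add: fex_def fpos_def)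

lemma locmin_subdiff:
  assumes "d > 0" "\<And>y. \<bar>y - x\<bar> < d \<Longrightarrow> f y \<ge> f x"
  shows "0 \<in> limiting_subdiff f x"
proof -
  let ?E = "{(y, \<alpha>). f y \<le> \<alpha>}"
  have "(0, -1) \<in> regular_normal_cone ?E (x, f x)"
    unfolding regular_normal_cone_def
  proof (safe)
    fix e :: real assume e: "e > 0"
    show "\<exists>\<delta>>0. \<forall>u'\<in>?E. norm (u' - (x, f x)) < \<delta> \<longrightarrow> inner (0, -1) (u' - (x, f x)) \<le> e * norm (u' - (x, f x))"
    proof (intro exI[of _ d] conjI ballI impI)
      fix u' assume u: "u' \<in> ?E" and n: "norm (u' - (x, f x)) < d"
      obtain y a where ua: "u' = (y, a)" by (cases u')
      have "\<bar>y - x\<bar> \<le> norm (u' - (x, f x))" using norm_fst_le[of "y - x" "a - f x"] ua by simp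
      hence "f y \<ge> f x" using n assms(2) by simp
      moreover have "f y \<le> a" using u ua by simp
      ultimately have "inner (0, -1) (u' - (x, f x)) \<le> 0" using ua by simp
      also have "0 \<le> e * norm (u' - (x, f x))" using e by simp
      finally show "inner (0, -1) (u' - (x, f x)) \<le> e * norm (u' - (x, f x))" .
    qed (use assms in auto)
  qed
  moreover have "(x, f x) \<in> ?E" by simp
  ultimately show ?thesis unfolding limiting_subdiff_def limiting_normal_cone_def
    by (intro CollectI conjI exI[of _ "\<lambda>k. (x, f x)"] exI[of _ "\<lambda>k. (0::real, -1::real)"]) auto
qed

lemma zero_subdiff_0: "0 \<in> limiting_subdiff fex 0"
  by (rule locmin_subdiff[of 1]) (auto simp: fex0 fex_nonneg)

lemma locmin_p: "\<bar>y - 7/2^(k+3)\<bar> < 1/2^(k+3) \<Longrightarrow> fex y \<ge> fex (7/2^(k+3))"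
proof -
  fix y :: real assume a: "\<bar>y - 7/2^(k+3)\<bar> < 1/2^(k+3)"
  have f: "\<And>z::real. 3/2^(k+2) \<le> z \<Longrightarrow> z < 1/2^k \<Longrightarrow> fex z = 1/2^k"
  proof -
    fix z :: real assume "3/2^(k+2) \<le> z" "z < 1/2^k"
    moreover have "(0::real) < 3/2^(k+2)" by simp
    ultimately show "fex z = 1/2^k" using fpos_flat[of k z] by (simp add: fex_def)
  qed
  have "3/2^(k+2) \<le> y" "y < 1/2^k" using a by (auto simp: field_simps abs_less_iff power_add)
  moreover have "3/2^(k+2) \<le> (7::real)/2^(k+3)" "(7::real)/2^(k+3) < 1/2^k" by (auto simp: field_simps power_add)
  ultimately show "fex y \<ge> fex (7/2^(k+3))" using f by simp
qed

lemma fex_even: "fex (-x) = fex x" by (simp add: fex_def)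

lemma zero_subdiff_p: "0 \<in> limiting_subdiff fex (7/2^(k+3))"
  by (rule locmin_subdiff[of "1/2^(k+3)"]) (auto intro: locmin_p)

lemma zero_subdiff_m: "0 \<in> limiting_subdiff fex (-(7/2^(k+3)))"
proof (rule locmin_subdiff[of "1/2^(k+3)"])
  fix y :: real assume a: "\<bar>y - -(7/2^(k+3))\<bar> < 1/2^(k+3)"
  hence "\<bar>-y - 7/2^(k+3)\<bar> < 1/2^(k+3)" by (simp add: abs_minus_commute)
  from locmin_p[OF this] show "fex (-(7/2^(k+3))) \<le> fex y"
    using fex_even[of y] fex_even[of "7/2^(k+3)"] by simp
qed simp

lemma partA: "x \<in> {-1..1} \<Longrightarrow> fex x \<ge> fex 0 + x\<^sup>2"
proof -
  assume "x \<in> {-1..1}"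
  hence x1: "\<bar>x\<bar> \<le> 1" by auto
  have "x\<^sup>2 = \<bar>x\<bar> * \<bar>x\<bar>" by (simp add: power2_eq_square abs_mult_self_eq)
  also have "\<dots> \<le> \<bar>x\<bar>" by (rule mult_left_le[OF x1 abs_ge_zero])
  finally show ?thesis using fex_ge[OF x1] fex0 by simp
qed

lemma partB: "strong_local_minimizer fex 0"
proof -
  have "\<forall>x. norm (x - 0) \<le> 1 \<longrightarrow> fex x - fex 0 \<ge> 2/2 * (norm (x - 0))\<^sup>2"
  proof (intro allI impI)
    fix x :: real assume "norm (x - 0) \<le> 1"
    hence "x \<in> {-1..1}" by auto
    from partA[OF this] show "2 / 2 * (norm (x - 0))\<^sup>2 \<le> fex x - fex 0" by simp
  qed
  thus ?thesis unfolding strong_local_minimizer_def by (intro exI[of _ 2] conjI exI[of _ 1]) auto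
qed

lemma partC: "(w, 0) \<in> tangent_cone (gph (limiting_subdiff fex)) (0, 0)"
proof (cases "w = 0")
  case True
  have "\<forall>k. (0::real \<times> real) + inverse (real (Suc k)) *\<^sub>R (0, 0) \<in> gph (limiting_subdiff fex)"
    using zero_subdiff_0 by (simp add: gph_def)
  thus ?thesis unfolding tangent_cone_def True
    by (intro CollectI exI[of _ "\<lambda>k. inverse (real (Suc k))"] exI[of _ "\<lambda>k. (0::real, 0::real)"] conjI
       LIMSEQ_inverse_real_of_nat tendsto_const) simp_all
next
  case False
  define t where "t k = 7/2^(k+3) / \<bar>w\<bar>" for k :: nat
  have l: "(\<lambda>k. 7/8 * inverse ((2::real)^k)) \<longlonglongrightarrow> 0"
    by (intro tendsto_mult_right_zero LIMSEQ_inverse_realpow_zero) simp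
  have e: "(\<lambda>k. 7/8 * inverse ((2::real)^k)) = (\<lambda>k. 7/2^(k+3))"
    by (simp add: power_add field_simps)
  have t0: "t \<longlonglongrightarrow> 0" unfolding t_def
    using l unfolding e by (intro tendsto_divide_zero)
  have mem: "(0, 0) + t k *\<^sub>R (w, 0) \<in> gph (limiting_subdiff fex)" for k
  proof (cases "w > 0")
    case True
    hence "t k * w = 7/2^(k+3)" using False unfolding t_def by simp
    thus ?thesis using zero_subdiff_p[of k] by (simp add: gph_def)
  next
    case F: False
    hence "t k * w = -(7/2^(k+3))" using False unfolding t_def by simp
    thus ?thesis using zero_subdiff_m[of k] by (simp add: gph_def)
  qed
  have tp: "\<forall>k. t k > 0" using False by (simp add: t_def)
  show ?thesis unfolding tangent_cone_def
    by (intro CollectI exI[of _ t] exI[of _ "\<lambda>k. (w, 0::real)"] conjI allI mem t0 tp tendsto_const)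
qed

theorem mainTheorem4:
  shows "(\<forall>x\<in>{-1..1}. fex x \<ge> fex 0 + x\<^sup>2)
    \<and> strong_local_minimizer fex 0
    \<and> UNIV \<times> {0} \<subseteq> tangent_cone (gph (limiting_subdiff fex)) (0, 0)
    \<and> (\<forall>w::real. w \<noteq> 0 \<longrightarrow> 0 \<in> graph_deriv (limiting_subdiff fex) 0 0 w \<and> 0 * w = (0::real))"
  using partA partB partC by (auto simp: graph_deriv_def)

end
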